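(* Suppose that $t=t(n)=O(\log n)$ is a positive integer. Then for all large enough $n$ and all positive integers $k$ with $1<n/k<t$, \[ \log(E_{n,k,t})=L_0(n,k,t)+O(\log^4 n). \]
   Context: $E_{n,k,t}$ is the expected number of unordered $t$-bounded $k$-colourings of the uniformly random graph $G_{n,1/2}$, i.e. partitions of $[n]$ into $k$ independent sets each of size at most $t$. Let $d_i=2^{\binom i2}i!$. For positive reals $k<n$ and a positive integer $t$, let $P^0_{n,k,t}$ be the set of $(n_i)_{i=1}^t\in\mathbb R^t$ with $n_i\ge0$, $\sum_{i=1}^t n_i=k$ and $\sum_{i=1}^t in_i=n$, and \[ L_0(n,k,t)=\sup_{(n_i)\in P^0_{n,k,t}}\Big\{n\log n-n+k-\sum_{i=1}^t n_i\log(n_id_i)\Big\}, \] with the convention $0\log 0=0$. Logarithms are natural. *)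

theory Defs
  imports "HOL-Probability.Probability" "HOL-Library.Disjoint_Sets" "HOL-Library.Landau_Symbols"
begin

definition pot_edges :: "nat \<Rightarrow> nat set set" where
  "pot_edges n = {e. e \<subseteq> {1..n} \<and> card e = 2}"

definition Gnp_half :: "nat \<Rightarrow> nat set set pmf" where
  "Gnp_half n = pmf_of_set (Pow (pot_edges n))"

definition indep_set :: "nat set set \<Rightarrow> nat set \<Rightarrow> bool" where
  "indep_set G B \<longleftrightarrow> (\<forall>e\<in>G. \<not> e \<subseteq> B)"

text \<open>Unordered t-bounded k-colourings of G: partitions of [n] into k independent
  sets (blocks, nonempty) each of size at most t.\<close>
definition bounded_colourings :: "nat \<Rightarrow> nat \<Rightarrow> nat \<Rightarrow> nat set set \<Rightarrow> nat set set set" where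
  "bounded_colourings n k t G =
     {P. partition_on {1..n} P \<and> card P = k \<and> (\<forall>B\<in>P. indep_set G B \<and> card B \<le> t)}"

definition E_col :: "nat \<Rightarrow> nat \<Rightarrow> nat \<Rightarrow> real" where
  "E_col n k t = measure_pmf.expectation (Gnp_half n) (\<lambda>G. real (card (bounded_colourings n k t G)))"

definition d_const :: "nat \<Rightarrow> real" where
  "d_const i = 2 powr (real (i choose 2)) * fact i"

definition xlog_term :: "nat \<Rightarrow> real \<Rightarrow> real" where
  "xlog_term i x = (if x = 0 then 0 else x * ln (x * d_const i))"

definition P0 :: "real \<Rightarrow> real \<Rightarrow> nat \<Rightarrow> (nat \<Rightarrow> real) set" where
  "P0 n k t = {x. (\<forall>i\<in>{1..t}. x i \<ge> 0) \<and> (\<forall>i. i \<notin> {1..t} \<longrightarrow> x i = 0)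
                 \<and> (\<Sum>i=1..t. x i) = k \<and> (\<Sum>i=1..t. real i * x i) = n}"

definition L0 :: "real \<Rightarrow> real \<Rightarrow> nat \<Rightarrow> real" where
  "L0 n k t = (SUP x\<in>P0 n k t. n * ln n - n + k - (\<Sum>i=1..t. xlog_term i (x i)))"

end

theory Submission
  imports Defs "HOL-Combinatorics.Multiset_Permutations"
begin

definition Parts :: "nat \<Rightarrow> nat \<Rightarrow> nat \<Rightarrow> nat set set set" where
  "Parts n k T = {P. partition_on {1..n} P \<and> card P = k \<and> (\<forall>B\<in>P. card B \<le> T)}"

lemma finite_Parts: "finite (Parts n k T)"
  by (rule finite_subset[OF _ finitely_many_partition_on[of "{1..n}"]]) (auto simp: Parts_def)

lemma finite_pot: "finite (pot_edges n)"
  unfolding pot_edges_def by (rule finite_subset[of _ "Pow {1..n}"]) auto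

lemma card_W:
  assumes P: "partition_on {1..n} P"
  shows "card {e\<in>pot_edges n. \<exists>B\<in>P. e \<subseteq> B} = (\<Sum>B\<in>P. card B choose 2)"
proof -
  have finP: "finite P" using finite_elements[OF _ P] by simp
  have sub: "\<And>B. B \<in> P \<Longrightarrow> B \<subseteq> {1..n}" using partition_onD1[OF P] by auto
  have eq: "{e\<in>pot_edges n. \<exists>B\<in>P. e \<subseteq> B} = (\<Union>B\<in>P. {e. e \<subseteq> B \<and> card e = 2})"
    using sub unfolding pot_edges_def by blast
  have "card (\<Union>B\<in>P. {e. e \<subseteq> B \<and> card e = 2}) = (\<Sum>B\<in>P. card {e. e \<subseteq> B \<and> card e = 2})"
  proof (rule card_UN_disjoint[OF finP])
    show "\<forall>i\<in>P. finite {e. e \<subseteq> i \<and> card e = 2}"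
      using sub by (auto intro: finite_subset[of _ "Pow i" for i] finite_subset[OF _ finite_atLeastAtMost])
    show "\<forall>i\<in>P. \<forall>j\<in>P. i \<noteq> j \<longrightarrow> {e. e \<subseteq> i \<and> card e = 2} \<inter> {e. e \<subseteq> j \<and> card e = 2} = {}"
    proof (intro ballI impI)
      fix i j assume ij: "i \<in> P" "j \<in> P" "i \<noteq> j"
      then have "disjnt i j" using partition_onD2[OF P] by (auto simp: pairwise_def)
      then show "{e. e \<subseteq> i \<and> card e = 2} \<inter> {e. e \<subseteq> j \<and> card e = 2} = {}"
      proof (intro equalityI subsetI)
        fix e assume "e \<in> {e. e \<subseteq> i \<and> card e = 2} \<inter> {e. e \<subseteq> j \<and> card e = 2}"
        then have "e \<subseteq> i \<inter> j" "card e = 2" by auto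
        then have "e = {}" "card e = 2" using \<open>disjnt i j\<close> by (auto simp: disjnt_def)
        then show "e \<in> {}" by simp
      qed simp
    qed
  qed
  also have "\<dots> = (\<Sum>B\<in>P. card B choose 2)"
    by (rule sum.cong[OF refl], rule n_subsets) (use sub in \<open>auto intro: finite_subset\<close>)
  finally show ?thesis using eq by simp
qed

lemma E_col_sum:
  "E_col n k T = (\<Sum>P\<in>Parts n k T. (1/2::real) ^ (\<Sum>B\<in>P. card B choose 2))"
proof -
  let ?pot = "pot_edges n"
  let ?W = "\<lambda>P. {e\<in>?pot. \<exists>B\<in>P. e \<subseteq> B}"
  have finpow: "finite (Pow ?pot)" using finite_pot by simp
  have E: "E_col n k T = (\<Sum>G\<in>Pow ?pot. real (card (bounded_colourings n k T G))) / card (Pow ?pot)"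
    unfolding E_col_def Gnp_half_def
    by (rule integral_pmf_of_set) (use finpow in auto)
  have bc: "bounded_colourings n k T G = {P\<in>Parts n k T. \<forall>B\<in>P. indep_set G B}" for G
    unfolding bounded_colourings_def Parts_def by auto
  have "(\<Sum>G\<in>Pow ?pot. real (card (bounded_colourings n k T G)))
      = (\<Sum>G\<in>Pow ?pot. \<Sum>P\<in>Parts n k T. if (\<forall>B\<in>P. indep_set G B) then 1 else 0)"
    unfolding bc by (simp add: sum.If_cases[OF finite_Parts] Int_def)
  also have "\<dots> = (\<Sum>P\<in>Parts n k T. \<Sum>G\<in>Pow ?pot. if (\<forall>B\<in>P. indep_set G B) then 1 else 0)"
    by (rule sum.swap)
  also have "\<dots> = (\<Sum>P\<in>Parts n k T. real (card (Pow (?pot - ?W P))))"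
  proof (rule sum.cong[OF refl])
    fix P assume "P \<in> Parts n k T"
    have "{G\<in>Pow ?pot. \<forall>B\<in>P. indep_set G B} = Pow (?pot - ?W P)"
      unfolding indep_set_def by blast
    then show "(\<Sum>G\<in>Pow ?pot. if (\<forall>B\<in>P. indep_set G B) then 1 else 0) = real (card (Pow (?pot - ?W P)))"
      using finpow by (simp add: sum.If_cases Int_def)
  qed
  finally have S: "(\<Sum>G\<in>Pow ?pot. real (card (bounded_colourings n k T G)))
     = (\<Sum>P\<in>Parts n k T. real (card (Pow (?pot - ?W P))))" .
  have "E_col n k T = (\<Sum>P\<in>Parts n k T. real (card (Pow (?pot - ?W P))) / card (Pow ?pot))"
    unfolding E S by (simp add: sum_divide_distrib)
  also have "\<dots> = (\<Sum>P\<in>Parts n k T. (1/2::real) ^ (\<Sum>B\<in>P. card B choose 2))"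
  proof (rule sum.cong[OF refl])
    fix P assume "P \<in> Parts n k T"
    then have P: "partition_on {1..n} P" by (simp add: Parts_def)
    have Wsub: "?W P \<subseteq> ?pot" by auto
    have finW: "finite (?W P)" using finite_pot by auto
    have c: "card (?pot - ?W P) = card ?pot - card (?W P)"
      by (rule card_Diff_subset[OF finW Wsub])
    have le: "card (?W P) \<le> card ?pot" by (rule card_mono[OF finite_pot Wsub])
    have "real (card (Pow (?pot - ?W P))) / card (Pow ?pot) = 2 ^ (card ?pot - card (?W P)) / 2 ^ card ?pot"
      using finite_pot c by (simp add: card_Pow)
    also have "\<dots> = (1/2) ^ card (?W P)"
      using le by (simp add: power_diff power_one_over)
    finally show "real (card (Pow (?pot - ?W P))) / card (Pow ?pot) = (1/2::real) ^ (\<Sum>B\<in>P. card B choose 2)"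
      using card_W[OF P] by simp
  qed
  finally show ?thesis .
qed


fun seqs :: "'a set \<Rightarrow> nat list \<Rightarrow> 'a set list set" where
  "seqs S [] = (if S = {} then {[]} else {})"
| "seqs S (i#is) = (\<Union>B\<in>{B. B \<subseteq> S \<and> card B = i}. (#) B ` seqs (S - B) is)"

lemma finite_seqs: "finite S \<Longrightarrow> finite (seqs S is)"
proof (induction "is" arbitrary: S)
  case (Cons i "is")
  have "finite {B. B \<subseteq> S \<and> card B = i}" using Cons.prems by (auto intro: finite_subset[of _ "Pow S"])
  then show ?case using Cons by auto
qed simp

lemma card_seqs:
  "finite S \<Longrightarrow> real (card (seqs S is)) =
     (if sum_list is = card S then fact (card S) / (\<Prod>i\<leftarrow>is. fact i) else 0)"
proof (induction "is" arbitrary: S)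
  case Nil then show ?case by auto
next
  case (Cons i "is")
  let ?C = "{B. B \<subseteq> S \<and> card B = i}"
  have finC: "finite ?C" using Cons.prems by (auto intro: finite_subset[of _ "Pow S"])
  have "card (seqs S (i#is)) = (\<Sum>B\<in>?C. card ((#) B ` seqs (S - B) is))"
    unfolding seqs.simps
    by (rule card_UN_disjoint[OF finC]) (use Cons.prems in \<open>auto intro: finite_seqs\<close>)
  also have "\<dots> = (\<Sum>B\<in>?C. card (seqs (S - B) is))"
    by (rule sum.cong[OF refl], rule card_image) auto
  finally have "real (card (seqs S (i#is))) = (\<Sum>B\<in>?C. real (card (seqs (S - B) is)))" by simp
  also have "\<dots> = (\<Sum>B\<in>?C. (if sum_list is = card S - i then fact (card S - i) / (\<Prod>i\<leftarrow>is. fact i) else 0))"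
  proof (rule sum.cong[OF refl])
    fix B assume B: "B \<in> ?C"
    then have "card (S - B) = card S - i" using Cons.prems by (auto simp: card_Diff_subset finite_subset)
    then show "real (card (seqs (S - B) is)) = (if sum_list is = card S - i then fact (card S - i) / (\<Prod>i\<leftarrow>is. fact i) else 0)"
      using Cons.IH[of "S - B"] Cons.prems by simp
  qed
  also have "\<dots> = real (card S choose i) * (if sum_list is = card S - i then fact (card S - i) / (\<Prod>i\<leftarrow>is. fact i) else 0)"
    using n_subsets[OF Cons.prems, of i] by simp
  also have "\<dots> = (if sum_list (i#is) = card S then fact (card S) / (\<Prod>i\<leftarrow>i#is. fact i) else 0)"
  proof (cases "i \<le> card S")
    case True
    then show ?thesis by (auto simp: binomial_fact field_simps)
  next
    case False
    then show ?thesis by (simp add: binomial_eq_0)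
  qed
  finally show ?case .
qed

lemma mem_seqs:
  "finite S \<Longrightarrow> (\<forall>i\<in>set is. i \<ge> 1) \<Longrightarrow>
    Bs \<in> seqs S is \<longleftrightarrow> (map card Bs = is \<and> distinct Bs \<and> disjoint (set Bs) \<and> \<Union>(set Bs) = S)"
proof (induction "is" arbitrary: S Bs)
  case Nil then show ?case by auto
next
  case (Cons i "is")
  show ?case
  proof
    assume "Bs \<in> seqs S (i # is)"
    then obtain B Bs' where B: "B \<subseteq> S" "card B = i" and Bs: "Bs = B # Bs'" and Bs': "Bs' \<in> seqs (S - B) is"
      by auto
    have fin: "finite (S - B)" using Cons.prems by auto
    from Cons.IH[OF fin] Bs' Cons.prems have IH: "map card Bs' = is" "distinct Bs'" "disjoint (set Bs')" "\<Union>(set Bs') = S - B"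
      by auto
    have "B \<noteq> {}" using B Cons.prems by auto
    then have "B \<notin> set Bs'" using IH(4) by auto
    moreover have "disjoint (set Bs)" unfolding Bs using IH(3,4)
      by (auto simp: pairwise_insert disjnt_def)
    ultimately show "map card Bs = i # is \<and> distinct Bs \<and> disjoint (set Bs) \<and> \<Union> (set Bs) = S"
      using IH B Bs by auto
  next
    assume R: "map card Bs = i # is \<and> distinct Bs \<and> disjoint (set Bs) \<and> \<Union> (set Bs) = S"
    then obtain B Bs' where Bs: "Bs = B # Bs'" by (cases Bs) auto
    have fin: "finite (S - B)" using Cons.prems by auto
    have dis: "B \<inter> \<Union>(set Bs') = {}" using R unfolding Bs by (auto simp: pairwise_insert disjnt_def)
    have "map card Bs' = is \<and> distinct Bs' \<and> disjoint (set Bs') \<and> \<Union>(set Bs') = S - B"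
      using R dis unfolding Bs by (auto simp: pairwise_insert)
    then have "Bs' \<in> seqs (S - B) is" using Cons.IH[OF fin] Cons.prems by auto
    then show "Bs \<in> seqs S (i # is)" using R Bs by auto
  qed
qed

definition SL :: "nat \<Rightarrow> nat \<Rightarrow> nat \<Rightarrow> nat list set" where
  "SL n k T = {is. length is = k \<and> set is \<subseteq> {1..T} \<and> sum_list is = n}"

lemma finite_SL: "finite (SL n k T)"
proof -
  have "SL n k T \<subseteq> {xs. set xs \<subseteq> {1..T} \<and> length xs = k}" by (auto simp: SL_def)
  then show ?thesis by (rule finite_subset) (rule finite_lists_length_eq, simp)
qed

lemma prod_list_div: "(\<Prod>x\<leftarrow>xs. f x) / (\<Prod>x\<leftarrow>xs. g x) = (\<Prod>x\<leftarrow>xs. f x / (g x :: real))"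
  by (induction xs) (auto simp flip: times_divide_times_eq)

lemma Seqs_eq:
  "{Bs. distinct Bs \<and> set Bs \<in> Parts n k T} = (\<Union>is\<in>SL n k T. seqs {1..n} is)"
proof (intro set_eqI iffI)
  fix Bs assume "Bs \<in> {Bs. distinct Bs \<and> set Bs \<in> Parts n k T}"
  then have d: "distinct Bs" and P: "partition_on {1..n} (set Bs)" and c: "card (set Bs) = k"
    and T: "\<forall>B\<in>set Bs. card B \<le> T" by (auto simp: Parts_def)
  have fB: "\<And>B. B \<in> set Bs \<Longrightarrow> finite B" using partition_onD1[OF P]
    by (metis Union_upper finite_atLeastAtMost finite_subset)
  have ne: "\<And>B. B \<in> set Bs \<Longrightarrow> card B \<ge> 1" using partition_onD3[OF P] fB
    by (metis One_nat_def Suc_leI card_gt_0_iff)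
  have "sum_list (map card Bs) = card (\<Union>(set Bs))"
    using card_Union_disjoint[OF partition_onD2[OF P] fB] d by (simp add: sum_list_distinct_conv_sum_set)
  also have "\<dots> = n" by (simp add: partition_onD1[OF P, symmetric])
  finally have "map card Bs \<in> SL n k T" using d c T ne
    by (auto simp: SL_def distinct_card)
  moreover have "Bs \<in> seqs {1..n} (map card Bs)"
    using mem_seqs[of "{1..n}" "map card Bs" Bs] ne d partition_onD1[OF P] partition_onD2[OF P] by auto
  ultimately show "Bs \<in> (\<Union>is\<in>SL n k T. seqs {1..n} is)" by blast
next
  fix Bs assume "Bs \<in> (\<Union>is\<in>SL n k T. seqs {1..n} is)"
  then obtain "is" where isSL: "is \<in> SL n k T" and Bs: "Bs \<in> seqs {1..n} is" by auto
  have ge: "\<forall>i\<in>set is. i \<ge> 1" using isSL by (auto simp: SL_def)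
  have R: "map card Bs = is" "distinct Bs" "disjoint (set Bs)" "\<Union>(set Bs) = {1..n}"
    using mem_seqs[of "{1..n}" "is" Bs] ge Bs by auto
  have "{} \<notin> set Bs"
  proof
    assume "{} \<in> set Bs"
    then have "0 \<in> set is" using R(1) by force
    then show False using ge by auto
  qed
  then have "partition_on {1..n} (set Bs)" using R by (auto simp: partition_on_def)
  moreover have "card (set Bs) = k" using R isSL by (auto simp: SL_def distinct_card dest: arg_cong[of _ _ length])
  moreover have "\<forall>B\<in>set Bs. card B \<le> T" using R(1) isSL by (fastforce simp: SL_def)
  ultimately show "Bs \<in> {Bs. distinct Bs \<and> set Bs \<in> Parts n k T}" using R by (auto simp: Parts_def)
qed

lemma sum_parts_SL:
  "fact k * (\<Sum>P\<in>Parts n k T. (1/2::real) ^ (\<Sum>B\<in>P. card B choose 2))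
   = fact n * (\<Sum>is\<in>SL n k T. \<Prod>i\<leftarrow>is. 1 / d_const i)"
proof -
  let ?w = "\<lambda>B::nat set. (1/2::real) ^ (card B choose 2)"
  have "fact k * (\<Sum>P\<in>Parts n k T. (1/2::real) ^ (\<Sum>B\<in>P. card B choose 2))
      = (\<Sum>P\<in>Parts n k T. \<Sum>Bs\<in>permutations_of_set P. \<Prod>B\<leftarrow>Bs. ?w B)"
    unfolding sum_distrib_left
  proof (rule sum.cong[OF refl])
    fix P assume P: "P \<in> Parts n k T"
    have finP: "finite P" using P finite_elements[of "{1..n}" P] by (auto simp: Parts_def)
    have "(\<Sum>Bs\<in>permutations_of_set P. \<Prod>B\<leftarrow>Bs. ?w B) = (\<Sum>Bs\<in>permutations_of_set P. \<Prod>B\<in>P. ?w B)"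
      by (rule sum.cong[OF refl]) (auto simp: permutations_of_set_def prod.distinct_set_conv_list[symmetric])
    also have "\<dots> = fact k * (1/2::real) ^ (\<Sum>B\<in>P. card B choose 2)"
      using finP P by (simp add: power_sum Parts_def)
    finally show "fact k * (1/2::real) ^ (\<Sum>B\<in>P. card B choose 2) = (\<Sum>Bs\<in>permutations_of_set P. \<Prod>B\<leftarrow>Bs. ?w B)" by simp
  qed
  also have "\<dots> = (\<Sum>Bs\<in>(\<Union>P\<in>Parts n k T. permutations_of_set P). \<Prod>B\<leftarrow>Bs. ?w B)"
    by (rule sum.UNION_disjoint[symmetric]) (simp_all add: finite_Parts, auto simp: permutations_of_set_def)
  also have "(\<Union>P\<in>Parts n k T. permutations_of_set P) = {Bs. distinct Bs \<and> set Bs \<in> Parts n k T}"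
    by (auto simp: permutations_of_set_def)
  also have "\<dots> = (\<Union>is\<in>SL n k T. seqs {1..n} is)" by (rule Seqs_eq)
  also have "(\<Sum>Bs\<in>(\<Union>is\<in>SL n k T. seqs {1..n} is). \<Prod>B\<leftarrow>Bs. ?w B)
      = (\<Sum>is\<in>SL n k T. \<Sum>Bs\<in>seqs {1..n} is. \<Prod>B\<leftarrow>Bs. ?w B)"
  proof (rule sum.UNION_disjoint)
    show "\<forall>i\<in>SL n k T. \<forall>j\<in>SL n k T. i \<noteq> j \<longrightarrow> seqs {1..n} i \<inter> seqs {1..n} j = {}"
    proof (intro ballI impI)
      fix i j assume ij: "i \<in> SL n k T" "j \<in> SL n k T" "i \<noteq> j"
      have "\<forall>x\<in>set i. x \<ge> 1" "\<forall>x\<in>set j. x \<ge> 1" using ij by (auto simp: SL_def)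
      then show "seqs {1..n} i \<inter> seqs {1..n} j = {}"
        using mem_seqs[of "{1..n}" i] mem_seqs[of "{1..n}" j] ij(3) by auto
    qed
  qed (auto simp: finite_SL finite_seqs)
  also have "\<dots> = (\<Sum>is\<in>SL n k T. fact n * (\<Prod>i\<leftarrow>is. 1 / d_const i))"
  proof (rule sum.cong[OF refl])
    fix "is" assume isSL: "is \<in> SL n k T"
    have ge: "\<forall>i\<in>set is. i \<ge> 1" using isSL by (auto simp: SL_def)
    have "(\<Sum>Bs\<in>seqs {1..n} is. \<Prod>B\<leftarrow>Bs. ?w B) = (\<Sum>Bs\<in>seqs {1..n} is. \<Prod>i\<leftarrow>is. (1/2::real) ^ (i choose 2))"
    proof (rule sum.cong[OF refl])
      fix Bs assume "Bs \<in> seqs {1..n} is"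
      then have "map card Bs = is" using mem_seqs[of "{1..n}" "is" Bs] ge by auto
      then have "is = map card Bs" by simp
      then show "(\<Prod>B\<leftarrow>Bs. ?w B) = (\<Prod>i\<leftarrow>is. (1/2::real) ^ (i choose 2))"
        by (simp add: comp_def)
    qed
    also have "\<dots> = fact n / (\<Prod>i\<leftarrow>is. fact i) * (\<Prod>i\<leftarrow>is. (1/2::real) ^ (i choose 2))"
      using card_seqs[of "{1..n}" "is"] isSL by (simp add: SL_def)
    also have "\<dots> = fact n * ((\<Prod>i\<leftarrow>is. (1/2::real) ^ (i choose 2)) / (\<Prod>i\<leftarrow>is. fact i))"
      by simp
    also have "\<dots> = fact n * (\<Prod>i\<leftarrow>is. 1 / d_const i)"
      unfolding prod_list_div d_const_def
      by (simp add: powr_realpow power_one_over)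
    finally show "(\<Sum>Bs\<in>seqs {1..n} is. \<Prod>B\<leftarrow>Bs. ?w B) = fact n * (\<Prod>i\<leftarrow>is. 1 / d_const i)" .
  qed
  finally show ?thesis by (simp add: sum_distrib_left)
qed


definition MS :: "nat \<Rightarrow> nat \<Rightarrow> nat \<Rightarrow> nat multiset set" where
  "MS n k T = mset ` SL n k T"

definition Fv :: "nat \<Rightarrow> nat \<Rightarrow> (nat \<Rightarrow> nat) \<Rightarrow> real" where
  "Fv n T c = fact n * (\<Prod>i=1..T. (1 / d_const i) ^ (c i) / fact (c i))"

lemma prod_list_count:
  assumes "finite A" "set xs \<subseteq> A"
  shows "(\<Prod>x\<leftarrow>xs. g x) = (\<Prod>i\<in>A. (g i :: real) ^ count (mset xs) i)"
  using assms(2)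
proof (induction xs)
  case Nil then show ?case by simp
next
  case (Cons x xs)
  have "(\<Prod>i\<in>A. g i ^ count (mset (x#xs)) i) = (\<Prod>i\<in>A. g i ^ count (mset xs) i * (if i = x then g i else 1))"
    by (rule prod.cong[OF refl]) auto
  also have "\<dots> = (\<Prod>i\<in>A. g i ^ count (mset xs) i) * g x"
    using Cons.prems assms(1) by (simp add: prod.distrib prod.delta)
  finally show ?case using Cons by simp
qed

lemma SL_mset: "xs \<in> SL n k T \<Longrightarrow> mset ys = mset xs \<Longrightarrow> ys \<in> SL n k T"
  unfolding SL_def by (metis (mono_tags, lifting) mem_Collect_eq set_mset_mset size_mset sum_mset_sum_list)

lemma E_MS: "E_col n k T = (\<Sum>M\<in>MS n k T. Fv n T (count M))"
proof -
  let ?g = "\<lambda>i. 1 / d_const i"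
  have "(\<Sum>is\<in>SL n k T. \<Prod>i\<leftarrow>is. ?g i) = (\<Sum>M\<in>MS n k T. \<Sum>is\<in>{is\<in>SL n k T. mset is = M}. \<Prod>i\<leftarrow>is. ?g i)"
    unfolding MS_def by (rule sum.image_gen[OF finite_SL])
  also have "\<dots> = (\<Sum>M\<in>MS n k T. fact k * (\<Prod>i=1..T. ?g i ^ count M i / fact (count M i)))"
  proof (rule sum.cong[OF refl])
    fix M assume "M \<in> MS n k T"
    then obtain xs where xs: "xs \<in> SL n k T" "M = mset xs" by (auto simp: MS_def)
    have sub: "set_mset M \<subseteq> {1..T}" and sz: "size M = k" using xs by (auto simp: SL_def)
    have eq: "{is\<in>SL n k T. mset is = M} = permutations_of_multiset M"
      using xs SL_mset by (auto simp: permutations_of_multiset_def)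
    have "(\<Sum>is\<in>{is\<in>SL n k T. mset is = M}. \<Prod>i\<leftarrow>is. ?g i)
        = (\<Sum>is\<in>permutations_of_multiset M. \<Prod>i=1..T. ?g i ^ count M i)"
      unfolding eq
    proof (rule sum.cong[OF refl])
      fix "is" assume "is \<in> permutations_of_multiset M"
      then have "mset is = M" by (simp add: permutations_of_multiset_def)
      then show "(\<Prod>i\<leftarrow>is. ?g i) = (\<Prod>i=1..T. ?g i ^ count M i)"
        using prod_list_count[of "{1..T}" "is" ?g] sub by auto
    qed
    also have "\<dots> = real (card (permutations_of_multiset M)) * (\<Prod>i=1..T. ?g i ^ count M i)"
      by simp
    also have "real (card (permutations_of_multiset M)) = fact k / (\<Prod>x\<in>set_mset M. fact (count M x))"
      unfolding card_permutations_of_multiset(1) sz[symmetric]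
      using real_of_nat_div[OF card_permutations_of_multiset(2)[of M]]
      by (simp add: of_nat_prod)
    also have "(\<Prod>x\<in>set_mset M. fact (count M x) :: real) = (\<Prod>x\<in>{1..T}. fact (count M x))"
      by (rule prod.mono_neutral_left) (use sub in \<open>auto simp: not_in_iff\<close>)
    also have "fact k / (\<Prod>x\<in>{1..T}. fact (count M x)) * (\<Prod>i=1..T. ?g i ^ count M i)
        = fact k * (\<Prod>i=1..T. ?g i ^ count M i / fact (count M i))"
      by (simp add: prod_dividef)
    finally show "(\<Sum>is\<in>{is\<in>SL n k T. mset is = M}. \<Prod>i\<leftarrow>is. ?g i)
        = fact k * (\<Prod>i=1..T. ?g i ^ count M i / fact (count M i))" .
  qed
  finally have S: "(\<Sum>is\<in>SL n k T. \<Prod>i\<leftarrow>is. ?g i) = fact k * (\<Sum>M\<in>MS n k T. (\<Prod>i=1..T. ?g i ^ count M i / fact (count M i)))"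
    by (simp add: sum_distrib_left)
  have "fact k * E_col n k T = fact k * (\<Sum>M\<in>MS n k T. Fv n T (count M))"
    unfolding E_col_sum sum_parts_SL S Fv_def by (simp add: sum_distrib_left mult.left_commute)
  then show ?thesis by simp
qed

lemma finite_MS: "finite (MS n k T)" unfolding MS_def using finite_SL by simp

lemma card_MS: "card (MS n k T) \<le> (k+1)^T"
proof -
  let ?f = "\<lambda>M. restrict (count M) {1..T}"
  have inj: "inj_on ?f (MS n k T)"
  proof
    fix M M' assume M: "M \<in> MS n k T" and M': "M' \<in> MS n k T" and eq: "?f M = ?f M'"
    have "set_mset M \<subseteq> {1..T}" "set_mset M' \<subseteq> {1..T}" using M M' by (auto simp: MS_def SL_def)
    then show "M = M'"
    proof (intro multiset_eqI)
      fix x show "count M x = count M' x"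
      proof (cases "x \<in> {1..T}")
        case True then show ?thesis using fun_cong[OF eq, of x] by simp
      next
        case False then show ?thesis using \<open>set_mset M \<subseteq> {1..T}\<close> \<open>set_mset M' \<subseteq> {1..T}\<close>
          by (metis count_eq_zero_iff subsetD)
      qed
    qed
  qed
  have "?f ` MS n k T \<subseteq> PiE {1..T} (\<lambda>_. {0..k})"
  proof
    fix y assume "y \<in> ?f ` MS n k T"
    then obtain M where M: "M \<in> MS n k T" and y: "y = ?f M" by auto
    have "size M = k" using M by (auto simp: MS_def SL_def)
    then have "count M i \<le> k" for i by (metis count_le_size)
    then show "y \<in> PiE {1..T} (\<lambda>_. {0..k})" using y by auto
  qed
  then have "card (?f ` MS n k T) \<le> card (PiE {1..T} (\<lambda>_. {0..k::nat}))"
    by (rule card_mono[rotated]) (simp add: finite_PiE)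
  also have "\<dots> = (k+1)^T" by (simp add: card_PiE)
  finally show ?thesis using card_image[OF inj] by simp
qed


lemma ln_succ_diff: "real m * (ln (real m + 1) - ln (real m)) \<le> 1"
proof (cases "m = 0")
  case True then show ?thesis by simp
next
  case False
  then have m: "real m > 0" by simp
  have "ln (real m + 1) - ln (real m) = ln ((real m + 1) / real m)"
    using m by (simp add: ln_div)
  also have "\<dots> \<le> (real m + 1) / real m - 1" by (rule ln_le_minus_one) (use m in simp)
  also have "\<dots> = 1 / real m" using m by (simp add: field_simps)
  finally show ?thesis using m by (simp add: field_simps)
qed

lemma ln_fact_lower: "real m * ln (real m) - real m \<le> ln (fact m)"
proof (induction m)
  case 0 then show ?case by simp
next
  case (Suc m)
  have "ln (fact (Suc m) :: real) = ln (fact m) + ln (real m + 1)"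
    by (simp add: ln_mult add.commute)
  moreover have "real (Suc m) * ln (real (Suc m)) - real (Suc m) \<le> real m * ln (real m) - real m + ln (real m + 1)"
    using ln_succ_diff[of m] by (simp add: algebra_simps)
  ultimately show ?case using Suc by linarith
qed

lemma ln_fact_U: "ln (fact m) \<le> (real m + 1) * ln (real m + 1) - real m"
proof (induction m)
  case 0 then show ?case by simp
next
  case (Suc m)
  have "ln (fact (Suc m) :: real) = ln (fact m) + ln (real m + 1)"
    by (simp add: ln_mult add.commute)
  have pos: "real m + 1 > 0" "real m + 2 > 0" by auto
  have "ln ((real m + 1) / (real m + 2)) \<le> (real m + 1) / (real m + 2) - 1"
    by (rule ln_le_minus_one) (use pos in simp)
  then have "ln (real m + 1) - ln (real m + 2) \<le> - 1 / (real m + 2)"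
    using pos by (simp add: ln_div field_simps)
  then have "(real m + 2) * (ln (real m + 1) - ln (real m + 2)) \<le> - 1"
    using pos by (simp add: field_simps)
  then have "(real m + 1) * ln (real m + 1) - real m + ln (real m + 1) \<le> (real m + 2) * ln (real m + 2) - (real m + 1)"
    by (simp add: algebra_simps)
  then show ?case using Suc \<open>ln (fact (Suc m) :: real) = ln (fact m) + ln (real m + 1)\<close>
    by (simp add: algebra_simps)
qed

lemma ln_fact_upper: "ln (fact m) \<le> real m * ln (real m) - real m + 1 + ln (real m + 1)"
proof -
  have "(real m + 1) * ln (real m + 1) = real m * (ln (real m + 1) - ln (real m)) + real m * ln (real m) + ln (real m + 1)"
    by (simp add: algebra_simps)
  then show ?thesis using ln_fact_U[of m] ln_succ_diff[of m] by linarith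
qed

lemma d_const_pos: "d_const i > 0"
  unfolding d_const_def by simp

lemma d_const_ge1: "d_const i \<ge> 1"
proof -
  have "1 \<le> 2 powr real (i choose 2)" by (rule ge_one_powr_ge_zero) auto
  moreover have "(1::real) \<le> fact i" by simp
  ultimately show ?thesis unfolding d_const_def by (metis mult_mono' mult_1 zero_le_one)
qed

lemma ln_d_nonneg: "ln (d_const i) \<ge> 0"
  using d_const_ge1 by simp

lemma ln_d_le: "ln (d_const i) \<le> 2 * real i ^ 2"
proof -
  have "ln (d_const i) = real (i choose 2) * ln 2 + ln (fact i)"
    unfolding d_const_def by (simp add: ln_mult)
  moreover have "real (i choose 2) \<le> real i ^ 2"
  proof -
    have "i choose 2 \<le> i ^ 2"
    proof (cases "2 \<le> i")
      case True then show ?thesis by (rule binomial_le_pow)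
    next
      case False then show ?thesis by (simp add: binomial_eq_0)
    qed
    then show ?thesis by (metis of_nat_le_iff of_nat_power)
  qed
  moreover have "ln 2 \<le> (1::real)" using ln_le_minus_one[of 2] by simp
  moreover have "ln (fact i) \<le> real i ^ 2"
  proof (cases "i = 0")
    case True then show ?thesis by simp
  next
    case False
    have "ln (fact i) \<le> ln (real (i ^ i))"
      by (rule ln_mono) (use fact_le_power[of i] in auto)
    also have "\<dots> = real i * ln (real i)" by (simp add: ln_realpow)
    also have "\<dots> \<le> real i * real i"
      using False by (intro mult_left_mono) (auto intro: less_imp_le[OF ln_less_self])
    finally show ?thesis by (simp add: power2_eq_square)
  qed
  ultimately show ?thesis
    using mult_mono[of "real (i choose 2)" "real i ^ 2" "ln 2" 1] by (simp add: ln_ge_zero)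
qed

lemma xlog_eq: "0 \<le> y \<Longrightarrow> xlog_term i y = y * ln y + y * ln (d_const i)"
  unfolding xlog_term_def using d_const_pos[of i] by (auto simp: ln_mult algebra_simps)

lemma xlnx_ge: "0 \<le> (y::real) \<Longrightarrow> y * ln y \<ge> y - 1"
proof (cases "y = 0")
  case False
  assume y: "0 \<le> y"
  then have yp: "y > 0" using False by simp
  have "ln (1/y) \<le> 1/y - 1" by (rule ln_le_minus_one) (use yp in simp)
  then have "- ln y \<le> 1/y - 1" using yp by (simp add: ln_div)
  then have "y * (- ln y) \<le> y * (1/y - 1)" using yp by (intro mult_left_mono) auto
  then show ?thesis using yp by (simp add: algebra_simps)
qed simp

lemma xlnx_diff:
  assumes "0 \<le> y" "0 \<le> z" "y \<le> N" "z \<le> N" "1 \<le> (N::real)"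
  shows "y * ln y - z * ln z \<le> \<bar>y - z\<bar> * (1 + ln N) + 1"
proof (cases "z \<le> y")
  case True
  have lnN: "ln N \<ge> 0" using assms by simp
  show ?thesis
  proof (cases "z = 0")
    case True
    show ?thesis
    proof (cases "y = 0")
      case False
      then have "ln y \<le> ln N" using assms by simp
      then have "y * ln y \<le> y * (1 + ln N)" using assms by (intro mult_left_mono) auto
      then show ?thesis using True assms by simp
    qed (use True lnN in simp)
  next
    case False
    then have zp: "z > 0" using assms by simp
    then have yp: "y > 0" using \<open>z \<le> y\<close> by simp
    have "ln y - ln z = ln (y / z)" using zp yp by (simp add: ln_div)
    also have "\<dots> \<le> y / z - 1" by (rule ln_le_minus_one) (use zp yp in simp)
    finally have "z * (ln y - ln z) \<le> z * (y / z - 1)" using zp by (intro mult_left_mono) auto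
    moreover have "z * (y / z - 1) = y - z" using zp by (simp add: field_simps)
    ultimately have a: "z * (ln y - ln z) \<le> y - z" by simp
    have "ln y \<le> ln N" using assms yp by simp
    then have b: "(y - z) * ln y \<le> (y - z) * ln N" using True by (intro mult_left_mono) auto
    have "y * ln y - z * ln z = (y - z) * ln y + z * (ln y - ln z)" by (simp add: algebra_simps)
    also have "\<dots> \<le> (y - z) * (1 + ln N)" using a b by (simp add: algebra_simps)
    finally show ?thesis using True by simp
  qed
next
  case False
  show ?thesis
  proof (cases "y \<le> 1")
    case True
    have "y * ln y \<le> 0"
    proof (cases "y = 0")
      case False
      then have "ln y \<le> 0" using True assms by simp
      then show ?thesis using assms by (simp add: mult_nonneg_nonpos)
    qed simp
    moreover have "z * ln z \<ge> -1" using xlnx_ge[of z] assms by simp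
    moreover have "0 \<le> \<bar>y - z\<bar> * (1 + ln N)" using assms by simp
    ultimately show ?thesis by linarith
  next
    case False
    have "y * ln y \<le> z * ln z"
      using False \<open>\<not> z \<le> y\<close> by (intro mult_mono) auto
    moreover have "0 \<le> \<bar>y - z\<bar> * (1 + ln N)" using assms by simp
    ultimately show ?thesis by linarith
  qed
qed

lemma xlog_diff:
  assumes "0 \<le> y" "0 \<le> z" "y \<le> N" "z \<le> N" "1 \<le> (N::real)" "\<bar>y - z\<bar> \<le> D"
  shows "xlog_term i y - xlog_term i z \<le> D * (1 + ln N) + 1 + D * (2 * real i ^ 2)"
proof -
  have "xlog_term i y - xlog_term i z = (y * ln y - z * ln z) + (y - z) * ln (d_const i)"
    using assms by (simp add: xlog_eq algebra_simps)
  also have "\<dots> \<le> (\<bar>y - z\<bar> * (1 + ln N) + 1) + \<bar>y - z\<bar> * ln (d_const i)"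
    using xlnx_diff[OF assms(1-5)] ln_d_nonneg[of i]
    by (intro add_mono) (auto intro: mult_right_mono)
  also have "\<dots> \<le> (D * (1 + ln N) + 1) + D * (2 * real i ^ 2)"
    using assms ln_d_nonneg[of i] ln_d_le[of i]
    by (intro add_mono mult_mono) auto
  finally show ?thesis .
qed

definition Gf :: "nat \<Rightarrow> nat \<Rightarrow> nat \<Rightarrow> (nat \<Rightarrow> real) \<Rightarrow> real" where
  "Gf n k T x = real n * ln (real n) - real n + real k - (\<Sum>i=1..T. xlog_term i (x i))"

lemma L0_eq: "L0 (real n) (real k) T = (SUP x\<in>P0 (real n) (real k) T. Gf n k T x)"
  unfolding L0_def Gf_def by simp

lemma Gf_bound: "x \<in> P0 (real n) (real k) T \<Longrightarrow> Gf n k T x \<le> real n * ln (real n) - real n + real k + real T"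
proof -
  assume x: "x \<in> P0 (real n) (real k) T"
  have "(\<Sum>i=1..T. xlog_term i (x i)) \<ge> (\<Sum>i=1..T. -1)"
  proof (rule sum_mono)
    fix i assume "i \<in> {1..T}"
    then have xi: "x i \<ge> 0" using x by (auto simp: P0_def)
    then have "xlog_term i (x i) \<ge> x i * ln (x i)"
      using ln_d_nonneg[of i] by (simp add: xlog_eq)
    moreover have "x i * ln (x i) \<ge> x i - 1" by (rule xlnx_ge[OF xi])
    ultimately show "-1 \<le> xlog_term i (x i)" using xi by linarith
  qed
  then show ?thesis unfolding Gf_def by simp
qed

lemma bdd_Gf: "bdd_above (Gf n k T ` P0 (real n) (real k) T)"
  using Gf_bound by (intro bdd_aboveI2) blast

lemma Gf_le_L0: "x \<in> P0 (real n) (real k) T \<Longrightarrow> Gf n k T x \<le> L0 (real n) (real k) T"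
  unfolding L0_eq by (rule cSUP_upper[OF _ bdd_Gf])

lemma ln_Fv:
  "ln (Fv n T c) = ln (fact n) - (\<Sum>i=1..T. real (c i) * ln (d_const i) + ln (fact (c i)))"
proof -
  have pos: "(1 / d_const i) ^ (c i) / fact (c i) > 0" for i using d_const_pos[of i] by simp
  have "ln (Fv n T c) = ln (fact n) + (\<Sum>i=1..T. ln ((1 / d_const i) ^ (c i) / fact (c i)))"
  proof -
    have "ln (\<Prod>i=1..T. (1 / d_const i) ^ (c i) / fact (c i)) = (\<Sum>i=1..T. ln ((1 / d_const i) ^ (c i) / fact (c i)))"
      by (rule ln_prod) (use pos in \<open>auto simp: less_imp_neq[symmetric] d_const_pos[THEN less_imp_neq, symmetric]\<close>)
    moreover have P: "(\<Prod>i=1..T. (1 / d_const i) ^ (c i) / fact (c i)) > 0" using pos by (simp add: prod_pos)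
    ultimately show ?thesis unfolding Fv_def ln_mult_pos[OF fact_gt_zero P] by simp
  qed
  also have "(\<Sum>i=1..T. ln ((1 / d_const i) ^ (c i) / fact (c i))) = (\<Sum>i=1..T. - (real (c i) * ln (d_const i) + ln (fact (c i))))"
  proof (intro sum.cong refl)
    fix i
    have dp: "d_const i > 0" by (rule d_const_pos)
    have "ln ((1 / d_const i) ^ (c i) / fact (c i)) = ln ((1 / d_const i) ^ (c i)) - ln (fact (c i))"
      by (rule ln_divide_pos) (use dp in auto)
    also have "ln ((1 / d_const i) ^ (c i)) = - (real (c i) * ln (d_const i))"
      using dp by (simp add: ln_realpow ln_div)
    finally show "ln ((1 / d_const i) ^ (c i) / fact (c i)) = - (real (c i) * ln (d_const i) + ln (fact (c i)))"
      by simp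
  qed
  finally show ?thesis by (simp add: sum_negf[symmetric] sum.distrib sum_subtractf)
qed

lemma Fv_pos: "Fv n T c > 0"
  unfolding Fv_def by (intro mult_pos_pos prod_pos ballI divide_pos_pos zero_less_power) (simp_all add: d_const_pos)

lemma Gf_nat:
  "Gf n k T (\<lambda>i. real (c i)) = real n * ln (real n) - real n + real k
     - (\<Sum>i=1..T. real (c i) * ln (real (c i)) + real (c i) * ln (d_const i))"
  unfolding Gf_def by (simp add: xlog_eq)

lemma Fv_upper:
  assumes "(\<Sum>i=1..T. c i) = k"
  shows "ln (Fv n T c) \<le> Gf n k T (\<lambda>i. real (c i)) + 1 + ln (real n + 1)"
proof -
  have k: "real k = (\<Sum>i=1..T. real (c i))" using assms by (metis of_nat_sum)
  have "(\<Sum>i=1..T. real (c i) * ln (d_const i) + ln (fact (c i)))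
     \<ge> (\<Sum>i=1..T. real (c i) * ln (d_const i) + (real (c i) * ln (real (c i)) - real (c i)))"
    by (intro sum_mono add_left_mono ln_fact_lower)
  then show ?thesis unfolding ln_Fv Gf_nat using ln_fact_upper[of n] k
    by (simp add: sum.distrib sum_subtractf algebra_simps)
qed

lemma Fv_lower:
  assumes "(\<Sum>i=1..T. c i) = k" "\<And>i. c i \<le> n"
  shows "ln (Fv n T c) \<ge> Gf n k T (\<lambda>i. real (c i)) - real T * (1 + ln (real n + 1))"
proof -
  have k: "real k = (\<Sum>i=1..T. real (c i))" using assms by (metis of_nat_sum)
  have "(\<Sum>i=1..T. real (c i) * ln (d_const i) + ln (fact (c i)))
     \<le> (\<Sum>i=1..T. real (c i) * ln (d_const i) + (real (c i) * ln (real (c i)) - real (c i) + 1 + ln (real n + 1)))"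
  proof (intro sum_mono add_left_mono)
    fix i
    have "ln (real (c i) + 1) \<le> ln (real n + 1)" using assms(2)[of i] by simp
    then show "ln (fact (c i)) \<le> real (c i) * ln (real (c i)) - real (c i) + 1 + ln (real n + 1)"
      using ln_fact_upper[of "c i"] by linarith
  qed
  then show ?thesis unfolding ln_Fv Gf_nat using ln_fact_lower[of n] k
    by (simp add: sum.distrib sum_subtractf algebra_simps)
qed


lemma fill:
  assumes "r \<le> s" "s \<le> r * T" "1 \<le> T"
  shows "\<exists>c::nat\<Rightarrow>nat. (\<forall>i. i \<notin> {1..T} \<longrightarrow> c i = 0) \<and> (\<Sum>i=1..T. c i) = r \<and> (\<Sum>i=1..T. i * c i) = s"
  using assms(1,2)
proof (induction r arbitrary: s)
  case 0
  then show ?case by (intro exI[of _ "\<lambda>_. 0"]) auto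
next
  case (Suc r)
  define j where "j = min T (s - r)"
  have j: "1 \<le> j" "j \<le> T" "j \<le> s" using Suc.prems assms(3) by (auto simp: j_def)
  have "r \<le> s - j" using Suc.prems by (auto simp: j_def)
  moreover have "s - j \<le> r * T"
  proof (cases "T \<le> s - r")
    case True then have "j = T" by (simp add: j_def)
    then show ?thesis using Suc.prems by (simp add: algebra_simps)
  next
    case False then have "j = s - r" by (simp add: j_def)
    then have "s - j = r" using Suc.prems by simp
    then show ?thesis using assms(3) by simp
  qed
  ultimately obtain c where c: "\<forall>i. i \<notin> {1..T} \<longrightarrow> c i = 0" "(\<Sum>i=1..T. c i) = r" "(\<Sum>i=1..T. i * c i) = s - j"
    using Suc.IH by blast
  define c' where "c' = (\<lambda>i. c i + (if i = j then 1 else 0))"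
  have jin: "j \<in> {1..T}" using j by auto
  have "(\<Sum>i=1..T. c' i) = Suc r" unfolding c'_def using c(2) jin by (simp add: sum.distrib)
  moreover have "(\<Sum>i=1..T. i * c' i) = s" unfolding c'_def using c(3) jin j
    by (simp add: sum.distrib algebra_simps if_distrib[of "(*) _"] cong: if_cong)
  moreover have "\<forall>i. i \<notin> {1..T} \<longrightarrow> c' i = 0" unfolding c'_def using c(1) jin by auto
  ultimately show ?case by blast
qed

lemma rounding:
  assumes x: "x \<in> P0 (real n) (real k) T" and T: "1 \<le> T"
  shows "\<exists>c::nat\<Rightarrow>nat. (\<forall>i. i \<notin> {1..T} \<longrightarrow> c i = 0) \<and> (\<Sum>i=1..T. c i) = k
          \<and> (\<Sum>i=1..T. i * c i) = n \<and> (\<forall>i\<in>{1..T}. \<bar>real (c i) - x i\<bar> \<le> real T + 1)"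
proof -
  have xnn: "\<And>i. i \<in> {1..T} \<Longrightarrow> x i \<ge> 0" and sx: "(\<Sum>i=1..T. x i) = real k"
    and six: "(\<Sum>i=1..T. real i * x i) = real n" using x by (auto simp: P0_def)
  define a where "a i = nat \<lfloor>x i\<rfloor>" for i
  have a1: "real (a i) \<le> x i" and a2: "x i < real (a i) + 1" if "i \<in> {1..T}" for i
    using xnn[OF that] unfolding a_def by linarith+
  define f where "f i = x i - real (a i)" for i
  have f0: "0 \<le> f i" and f1: "f i < 1" if "i \<in> {1..T}" for i
    using a1[OF that] a2[OF that] unfolding f_def by linarith+
  have R: "real k - real (\<Sum>i=1..T. a i) = (\<Sum>i=1..T. f i)"
    unfolding f_def sx[symmetric] by (simp add: sum_subtractf)
  have S: "real n - real (\<Sum>i=1..T. i * a i) = (\<Sum>i=1..T. real i * f i)"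
    unfolding f_def six[symmetric] by (simp add: sum_subtractf algebra_simps)
  have Rnn: "(\<Sum>i=1..T. f i) \<ge> 0" by (rule sum_nonneg, rule f0)
  have RS: "(\<Sum>i=1..T. f i) \<le> (\<Sum>i=1..T. real i * f i)"
  proof (rule sum_mono)
    fix i assume i: "i \<in> {1..T}"
    have "1 * f i \<le> real i * f i" using f0[OF i] i by (intro mult_right_mono) auto
    then show "f i \<le> real i * f i" by simp
  qed
  have SR: "(\<Sum>i=1..T. real i * f i) \<le> (\<Sum>i=1..T. real T * f i)"
  proof (rule sum_mono)
    fix i assume i: "i \<in> {1..T}"
    show "real i * f i \<le> real T * f i" using f0[OF i] i by (intro mult_right_mono) auto
  qed
  have RT: "(\<Sum>i=1..T. f i) \<le> (\<Sum>i=1..T. 1)" by (rule sum_mono, rule less_imp_le, rule f1)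
  define r where "r = k - (\<Sum>i=1..T. a i)"
  define s where "s = n - (\<Sum>i=1..T. i * a i)"
  have "real (\<Sum>i=1..T. a i) \<le> real k" using R Rnn by linarith
  then have ka: "(\<Sum>i=1..T. a i) \<le> k" by (simp only: of_nat_le_iff)
  have "real (\<Sum>i=1..T. i * a i) \<le> real n" using S Rnn RS by linarith
  then have na: "(\<Sum>i=1..T. i * a i) \<le> n" by (simp only: of_nat_le_iff)
  have rr: "real r = (\<Sum>i=1..T. f i)" using R unfolding r_def of_nat_diff[OF ka] .
  have ss: "real s = (\<Sum>i=1..T. real i * f i)" using S unfolding s_def of_nat_diff[OF na] .
  have "r \<le> s" using rr ss RS by linarith
  moreover have "s \<le> r * T"
  proof -
    have "real s \<le> real r * real T" using rr ss SR by (simp add: sum_distrib_left[symmetric] mult.commute)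
    then show ?thesis by (simp only: of_nat_mult[symmetric] of_nat_le_iff)
  qed
  ultimately obtain c0 where c0: "\<forall>i. i \<notin> {1..T} \<longrightarrow> c0 i = 0" "(\<Sum>i=1..T. c0 i) = r" "(\<Sum>i=1..T. i * c0 i) = s"
    using fill[OF _ _ T] by blast
  have rT: "real r \<le> real T" using rr RT by simp
  define c where "c i = (if i \<in> {1..T} then a i + c0 i else 0)" for i
  have "(\<Sum>i=1..T. c i) = (\<Sum>i=1..T. a i) + (\<Sum>i=1..T. c0 i)" unfolding c_def by (simp add: sum.distrib)
  then have ck: "(\<Sum>i=1..T. c i) = k" using c0 ka unfolding r_def by simp
  have "(\<Sum>i=1..T. i * c i) = (\<Sum>i=1..T. i * a i) + (\<Sum>i=1..T. i * c0 i)" unfolding c_def by (simp add: sum.distrib algebra_simps)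
  then have cn: "(\<Sum>i=1..T. i * c i) = n" using c0 na unfolding s_def by simp
  have "\<bar>real (c i) - x i\<bar> \<le> real T + 1" if i: "i \<in> {1..T}" for i
  proof -
    have "c0 i \<le> r" using c0(2) member_le_sum[of i "{1..T}" c0] i by simp
    then have "real (c0 i) \<le> real T" using rT by linarith
    moreover have "real (c i) - x i = real (c0 i) - f i" using i unfolding c_def f_def by simp
    ultimately show ?thesis using f0[OF i] f1[OF i] by linarith
  qed
  moreover have "\<forall>i. i \<notin> {1..T} \<longrightarrow> c i = 0" unfolding c_def by simp
  ultimately show ?thesis using ck cn by blast
qed


lemma list_count_sums:
  assumes "finite A" "set xs \<subseteq> A"
  shows "(\<Sum>i\<in>A. count (mset xs) i) = length xs \<and> (\<Sum>i\<in>A. i * count (mset xs) i) = sum_list xs"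
  using assms(2)
proof (induction xs)
  case Nil then show ?case by simp
next
  case (Cons x xs)
  have e1: "(\<Sum>i\<in>A. count (mset (x#xs)) i) = (\<Sum>i\<in>A. count (mset xs) i + (if i = x then 1 else 0))"
    by (rule sum.cong[OF refl]) auto
  have e2: "(\<Sum>i\<in>A. i * count (mset (x#xs)) i) = (\<Sum>i\<in>A. i * count (mset xs) i + (if i = x then x else 0))"
    by (rule sum.cong[OF refl]) auto
  show ?case using Cons assms(1) unfolding e1 e2 by (simp add: sum.distrib sum.delta)
qed

fun mklist :: "(nat \<Rightarrow> nat) \<Rightarrow> nat \<Rightarrow> nat list" where
  "mklist c 0 = []"
| "mklist c (Suc T) = mklist c T @ replicate (c (Suc T)) (Suc T)"

lemma mklist_props:
  "set (mklist c T) \<subseteq> {1..T} \<and> length (mklist c T) = (\<Sum>i=1..T. c i)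
   \<and> sum_list (mklist c T) = (\<Sum>i=1..T. i * c i)
   \<and> (\<forall>j. count (mset (mklist c T)) j = (if j \<in> {1..T} then c j else 0))"
proof (induction T)
  case 0 then show ?case by simp
next
  case (Suc T)
  then show ?case by (auto simp: sum_list_replicate)
qed

lemma MS_count:
  assumes "M \<in> MS n k T"
  shows "(\<forall>i. i \<notin> {1..T} \<longrightarrow> count M i = 0) \<and> (\<Sum>i=1..T. count M i) = k \<and> (\<Sum>i=1..T. i * count M i) = n"
proof -
  obtain xs where xs: "xs \<in> SL n k T" "M = mset xs" using assms by (auto simp: MS_def)
  have sub: "set xs \<subseteq> {1..T}" using xs by (auto simp: SL_def)
  then have "\<forall>i. i \<notin> {1..T} \<longrightarrow> count M i = 0" using xs by (auto simp: count_eq_zero_iff)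
  then show ?thesis using list_count_sums[OF _ sub] xs by (auto simp: SL_def)
qed

lemma count_in_P0:
  assumes "\<forall>i. i \<notin> {1..T} \<longrightarrow> c i = 0" "(\<Sum>i=1..T. c i) = k" "(\<Sum>i=1..T. i * c i) = n"
  shows "(\<lambda>i. real (c i)) \<in> P0 (real n) (real k) T"
proof -
  have "real k = (\<Sum>i=1..T. real (c i))" unfolding assms(2)[symmetric] by simp
  moreover have "real n = (\<Sum>i=1..T. real i * real (c i))" unfolding assms(3)[symmetric] by simp
  ultimately show ?thesis using assms(1) unfolding P0_def by auto
qed

lemma Fv_cong: "(\<And>i. i \<in> {1..T} \<Longrightarrow> c i = c' i) \<Longrightarrow> Fv n T c = Fv n T c'"
  unfolding Fv_def by (intro arg_cong[where f="(*) (fact n)"] prod.cong) auto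

lemma main_bounds:
  assumes T: "1 \<le> T" and k: "1 \<le> k" and kn: "k \<le> n" and nkT: "n \<le> k * T"
  shows "ln (E_col n k T) \<le> L0 (real n) (real k) T + real T * ln (real k + 1) + 1 + ln (real n + 1)"
    and "ln (E_col n k T) \<ge> L0 (real n) (real k) T - 1 - real T * (1 + ln (real n + 1))
            - real T * ((real T + 1) * (1 + ln (real n)) + 1 + (real T + 1) * (2 * real T ^ 2))"
proof -
  have n1: "1 \<le> n" using k kn by simp
  have nR: "(1::real) \<le> real n" using n1 by simp
  obtain c1 where c1: "\<forall>i. i \<notin> {1..T} \<longrightarrow> c1 i = 0" "(\<Sum>i=1..T. c1 i) = k" "(\<Sum>i=1..T. i * c1 i) = n"
    using fill[OF kn _ T] nkT by blast
  have ne: "P0 (real n) (real k) T \<noteq> {}" using count_in_P0[OF c1] by blast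
  have "L0 (real n) (real k) T - 1 < (SUP x\<in>P0 (real n) (real k) T. Gf n k T x)" using L0_eq by simp
  then obtain x where x: "x \<in> P0 (real n) (real k) T" and xL: "L0 (real n) (real k) T - 1 < Gf n k T x"
    using less_cSUP_iff[OF ne bdd_Gf] by blast
  obtain c where c: "\<forall>i. i \<notin> {1..T} \<longrightarrow> c i = 0" "(\<Sum>i=1..T. c i) = k" "(\<Sum>i=1..T. i * c i) = n"
     and cx: "\<forall>i\<in>{1..T}. \<bar>real (c i) - x i\<bar> \<le> real T + 1"
    using rounding[OF x T] by blast
  have xnn: "\<And>i. i \<in> {1..T} \<Longrightarrow> x i \<ge> 0" and sx: "(\<Sum>i=1..T. x i) = real k"
    using x by (auto simp: P0_def)
  have xk: "x i \<le> real k" if i: "i \<in> {1..T}" for i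
    using member_le_sum[of i "{1..T}" x] xnn i sx by auto
  have ck: "c i \<le> k" for i
  proof (cases "i \<in> {1..T}")
    case True then show ?thesis using member_le_sum[of i "{1..T}" c] c(2) by simp
  qed (use c(1) in auto)
  define M where "M = mset (mklist c T)"
  have Mprops: "set (mklist c T) \<subseteq> {1..T}" "length (mklist c T) = k" "sum_list (mklist c T) = n"
    "\<And>j. count M j = (if j \<in> {1..T} then c j else 0)"
    using mklist_props[of c T] c unfolding M_def by auto
  have MMS: "M \<in> MS n k T" unfolding MS_def M_def SL_def using Mprops(1-3) by auto
  have FvM: "Fv n T (count M) = Fv n T c" by (rule Fv_cong) (simp add: Mprops(4))
  have Esum: "E_col n k T = (\<Sum>M\<in>MS n k T. Fv n T (count M))" by (rule E_MS)
  have Epos: "E_col n k T \<ge> Fv n T c"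
    unfolding Esum FvM[symmetric]
    by (rule member_le_sum[OF MMS]) (auto intro: less_imp_le Fv_pos simp: finite_MS)
  have Epos': "E_col n k T > 0" using Epos Fv_pos[of n T c] by linarith
  have "Gf n k T x - Gf n k T (\<lambda>i. real (c i)) = (\<Sum>i=1..T. xlog_term i (real (c i)) - xlog_term i (x i))"
    unfolding Gf_def by (simp add: sum_subtractf)
  also have "\<dots> \<le> (\<Sum>i=1..T. (real T + 1) * (1 + ln (real n)) + 1 + (real T + 1) * (2 * real T ^ 2))"
  proof (rule sum_mono)
    fix i assume i: "i \<in> {1..T}"
    have "xlog_term i (real (c i)) - xlog_term i (x i) \<le> (real T + 1) * (1 + ln (real n)) + 1 + (real T + 1) * (2 * real i ^ 2)"
      using ck[of i] xk[OF i] xnn[OF i] cx i kn nR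
      by (intro xlog_diff) auto
    also have "\<dots> \<le> (real T + 1) * (1 + ln (real n)) + 1 + (real T + 1) * (2 * real T ^ 2)"
      using i by (intro add_left_mono mult_left_mono) (auto intro: power_mono)
    finally show "xlog_term i (real (c i)) - xlog_term i (x i) \<le> (real T + 1) * (1 + ln (real n)) + 1 + (real T + 1) * (2 * real T ^ 2)" .
  qed
  also have "\<dots> = real T * ((real T + 1) * (1 + ln (real n)) + 1 + (real T + 1) * (2 * real T ^ 2))" by simp
  finally have G1: "Gf n k T (\<lambda>i. real (c i)) \<ge> Gf n k T x - real T * ((real T + 1) * (1 + ln (real n)) + 1 + (real T + 1) * (2 * real T ^ 2))"
    by linarith
  have "ln (E_col n k T) \<ge> ln (Fv n T c)" using Epos Fv_pos[of n T c] by simp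
  moreover have "ln (Fv n T c) \<ge> Gf n k T (\<lambda>i. real (c i)) - real T * (1 + ln (real n + 1))"
    by (rule Fv_lower[OF c(2)]) (use ck kn in \<open>auto intro: le_trans\<close>)
  ultimately show "ln (E_col n k T) \<ge> L0 (real n) (real k) T - 1 - real T * (1 + ln (real n + 1))
            - real T * ((real T + 1) * (1 + ln (real n)) + 1 + (real T + 1) * (2 * real T ^ 2))"
    using G1 xL by linarith
  let ?B = "exp (L0 (real n) (real k) T + 1 + ln (real n + 1))"
  have "E_col n k T \<le> (\<Sum>M\<in>MS n k T. ?B)"
    unfolding Esum
  proof (rule sum_mono)
    fix M assume M: "M \<in> MS n k T"
    note cM = MS_count[OF M]
    have "ln (Fv n T (count M)) \<le> Gf n k T (\<lambda>i. real (count M i)) + 1 + ln (real n + 1)"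
      by (rule Fv_upper) (use cM in auto)
    also have "Gf n k T (\<lambda>i. real (count M i)) \<le> L0 (real n) (real k) T"
      by (rule Gf_le_L0, rule count_in_P0) (use cM in auto)
    finally have "ln (Fv n T (count M)) \<le> L0 (real n) (real k) T + 1 + ln (real n + 1)" by simp
    then show "Fv n T (count M) \<le> ?B"
      using Fv_pos[of n T "count M"] by (metis exp_le_cancel_iff exp_ln)
  qed
  also have "\<dots> = real (card (MS n k T)) * ?B" by simp
  also have "\<dots> \<le> real ((k+1)^T) * ?B" 
  proof (rule mult_right_mono)
    show "real (card (MS n k T)) \<le> real ((k+1)^T)" using card_MS[of n k T] by (simp only: of_nat_le_iff)
  qed simp
  finally have Eup: "E_col n k T \<le> (real k + 1) ^ T * ?B" by (simp add: add.commute)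
  have "ln (E_col n k T) \<le> ln ((real k + 1) ^ T * ?B)" using Eup Epos' by simp
  also have "\<dots> = real T * ln (real k + 1) + (L0 (real n) (real k) T + 1 + ln (real n + 1))"
    by (simp add: ln_mult ln_realpow)
  finally show "ln (E_col n k T) \<le> L0 (real n) (real k) T + real T * ln (real k + 1) + 1 + ln (real n + 1)"
    by simp
qed


lemma pow_chain: "1 \<le> (V::real) \<Longrightarrow> V \<le> V^2 \<and> V^2 \<le> V^3 \<and> V^3 \<le> V^4 \<and> 1 \<le> V^4"
  using power_increasing[of 1 2 V] power_increasing[of 2 3 V] power_increasing[of 3 4 V] one_le_power[of V 4] by simp

lemma poly_up:
  fixes V T a c :: real
  assumes "1 \<le> V" "0 \<le> T" "T \<le> V" "0 \<le> a" "a \<le> 3*V" "0 \<le> c" "c \<le> 3*V"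
  shows "T * a + 1 + c \<le> 10 * V^4"
proof -
  have "T * a \<le> V * (3*V)" using assms by (intro mult_mono) auto
  then have "T * a \<le> 3 * V^2" by (simp add: power2_eq_square)
  then show ?thesis using pow_chain[OF assms(1)] assms by linarith
qed

lemma poly_low:
  fixes V T b c :: real
  assumes "1 \<le> V" "0 \<le> T" "T + 1 \<le> V" "0 \<le> b" "b \<le> 3*V" "0 \<le> c" "c \<le> 3*V"
  shows "1 + T * c + T * ((T + 1) * b + 1 + (T + 1) * (2 * T^2)) \<le> 20 * V^4"
proof -
  have TV: "T \<le> V" using assms by simp
  have h1: "T * c \<le> V * (3*V)" using assms TV by (intro mult_mono) auto
  have h2: "T * ((T + 1) * b) \<le> V * (V * (3*V))" using assms TV by (intro mult_mono) auto
  have h3: "T^2 \<le> V^2" using assms TV by (intro power_mono) auto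
  have h4: "T * ((T + 1) * (2 * T^2)) \<le> V * (V * (2 * V^2))" using assms TV h3 by (intro mult_mono) auto
  have e: "V * (3*V) = 3 * V^2" "V * (V * (3*V)) = 3 * V^3" "V * (V * (2 * V^2)) = 2 * V^4"
    by (simp_all add: power2_eq_square power3_eq_cube power4_eq_xxxx)
  have "1 + T * c + T * ((T + 1) * b + 1 + (T + 1) * (2 * T^2))
      = 1 + T * c + T * ((T + 1) * b) + T + T * ((T + 1) * (2 * T^2))" by (simp add: algebra_simps)
  also have "\<dots> \<le> 1 + 3 * V^2 + 3 * V^3 + V + 2 * V^4" using h1 h2 h4 e TV by linarith
  also have "\<dots> \<le> 20 * V^4" using pow_chain[OF assms(1)] by linarith
  finally show ?thesis .
qed

theorem lemma30:
  fixes t :: "nat \<Rightarrow> nat"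
  assumes tpos: "\<And>n. t n > 0"
    and tlog: "(\<lambda>n. real (t n)) \<in> O(\<lambda>n. ln (real n))"
  shows "\<exists>C N. \<forall>n\<ge>N. \<forall>k::nat. k > 0 \<and> 1 < real n / real k \<and> real n / real k < real (t n)
           \<longrightarrow> \<bar>ln (E_col n k (t n)) - L0 (real n) (real k) (t n)\<bar> \<le> C * (ln (real n)) ^ 4"
proof -
  from tlog obtain C0 where C0: "C0 > 0" and ev: "eventually (\<lambda>n. norm (real (t n)) \<le> C0 * norm (ln (real n))) at_top"
    by (elim landau_o.bigE)
  then obtain N0 where N0: "\<And>n. n \<ge> N0 \<Longrightarrow> real (t n) \<le> C0 * \<bar>ln (real n)\<bar>"
    by (auto simp: eventually_at_top_linorder)
  define C where "C = 20 * (C0 + 1)^4"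
  have "\<forall>n\<ge>max N0 4. \<forall>k::nat. k > 0 \<and> 1 < real n / real k \<and> real n / real k < real (t n)
           \<longrightarrow> \<bar>ln (E_col n k (t n)) - L0 (real n) (real k) (t n)\<bar> \<le> C * (ln (real n)) ^ 4"
  proof (intro allI impI)
    fix n k :: nat
    assume n: "max N0 4 \<le> n" and H: "k > 0 \<and> 1 < real n / real k \<and> real n / real k < real (t n)"
    define T where "T = t n"
    define L where "L = ln (real n)"
    have T1: "1 \<le> T" using tpos[of n] by (simp add: T_def)
    have kpos: "real k > 0" using H by simp
    have "real k < real n" using H kpos by (simp add: field_simps)
    then have kn: "k \<le> n" by simp
    have "real n < real T * real k" using H kpos by (simp add: field_simps T_def)
    then have "real n \<le> real (k * T)" by (simp add: mult.commute)
    then have "n \<le> k * T" by (simp only: of_nat_le_iff)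
    have n4: "(4::real) \<le> real n" using n by simp
    have L1: "1 \<le> L"
    proof -
      have "ln (4::real) = 2 * ln 2" using ln_realpow[of 2 2] by simp
      then have "1 \<le> ln (4::real)" using ln2_ge_two_thirds by simp
      also have "\<dots> \<le> L" unfolding L_def using n4 by simp
      finally show ?thesis .
    qed
    have TL: "real T \<le> C0 * L" using N0[of n] n L1 by (simp add: T_def L_def)
    define V where "V = (C0 + 1) * L"
    have "1 * 1 \<le> (C0 + 1) * L" by (rule mult_mono) (use C0 L1 in auto)
    then have V1: "1 \<le> V" unfolding V_def by simp
    have LV: "L \<le> V" unfolding V_def using C0 L1 by (simp add: algebra_simps)
    have TV: "real T + 1 \<le> V" unfolding V_def using TL L1 by (simp add: algebra_simps)
    have ln1: "ln (real n + 1) \<le> 2 * L"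
    proof -
      have "4 * real n \<le> real n * real n" using n4 by (intro mult_right_mono) auto
      then have "real n + 1 \<le> real n ^ 2" unfolding power2_eq_square using n4 by linarith
      then have "ln (real n + 1) \<le> ln (real n ^ 2)" using n4 by simp
      then show ?thesis by (simp add: ln_realpow L_def)
    qed
    have lnk: "ln (real k + 1) \<le> ln (real n + 1)" using kn by simp
    have lnk0: "0 \<le> ln (real k + 1)" by simp
    have up: "ln (E_col n k T) \<le> L0 (real n) (real k) T + real T * ln (real k + 1) + 1 + ln (real n + 1)"
      and lo: "ln (E_col n k T) \<ge> L0 (real n) (real k) T - 1 - real T * (1 + ln (real n + 1))
            - real T * ((real T + 1) * (1 + ln (real n)) + 1 + (real T + 1) * (2 * real T ^ 2))"
      using main_bounds[OF T1 _ kn \<open>n \<le> k * T\<close>] H by auto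
    have pu: "real T * ln (real k + 1) + 1 + ln (real n + 1) \<le> 10 * V^4"
    proof (rule poly_up)
      have "0 \<le> ln (real n + 1)" "0 \<le> real T" by simp_all
      then show "1 \<le> V" "0 \<le> real T" "real T \<le> V" "0 \<le> ln (real k + 1)" "ln (real k + 1) \<le> 3 * V"
        "0 \<le> ln (real n + 1)" "ln (real n + 1) \<le> 3 * V"
        using V1 TV lnk lnk0 ln1 LV L1 by linarith+
    qed
    have pl: "1 + real T * (1 + ln (real n + 1)) + real T * ((real T + 1) * (1 + ln (real n)) + 1 + (real T + 1) * (2 * real T ^ 2)) \<le> 20 * V^4"
      by (rule poly_low) (use V1 TV ln1 LV L1 n4 in \<open>auto simp: L_def\<close>)
    have "V^4 = (C0 + 1)^4 * L^4" unfolding V_def by (simp add: power_mult_distrib)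
    then have "\<bar>ln (E_col n k T) - L0 (real n) (real k) T\<bar> \<le> C * L^4"
      using up lo pu pl unfolding C_def by (simp add: abs_le_iff)
    then show "\<bar>ln (E_col n k (t n)) - L0 (real n) (real k) (t n)\<bar> \<le> C * (ln (real n)) ^ 4"
      by (simp add: T_def L_def)
  qed
  then show ?thesis by blast
qed

end
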